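(* Let $(P,\omega)$ be a sign-graded labeled poset of rank $r$ with $p=|P|$ and $\omega$ canonical, and let $\pi\in\mathcal{L}(P,\omega)$. Let $\hat\pi$ be the element of $\operatorname{Orb}(\pi)$ such that $0\hat\pi0$ has no double descents. Then $$\sum_{\sigma\in\operatorname{Orb}(\pi)}t^{\operatorname{des}(\sigma)}=t^{\operatorname{des}(\hat\pi)}(1+t)^{p-r-1-2\operatorname{des}(\hat\pi)}.$$ Moreover, if $r=0$ then $\operatorname{peak}$ is constant on each orbit of the $\mathbb{Z}_2^P$-action and $\operatorname{peak}(\pi)=\operatorname{des}(\hat\pi)$ for all $\pi\in\mathcal{L}(P,\omega)$.
   Context: A labeled poset is a finite poset $P$ with an injection $\omega:P\to\mathbb{Z}$. Its Jordan–Hölder set $\mathcal{L}(P,\omega)$ is the set of words $\pi=a_1\cdots a_p$ that are permutations of $\omega(P)$ such that $x<_Py$ implies $\omega(x)$ precedes $\omega(y)$. For a cover relation $x\lessdot y$ in $P$ let $\epsilon(x,y)=1$ if $\omega(x)<\omega(y)$ and $-1$ otherwise. $(P,\omega)$ is sign-graded if for every maximal chain $x_1<x_2<\cdots<x_k$ the sum $\sum_{i=2}^k\epsilon(x_{i-1},x_i)$ is the same; this common value $r$ is the rank, and $\rho(x)$ is this sum along any saturated chain from a minimal element to $x$. The labeling $\omega$ is canonical if $(P,\omega)$ is sign-graded, $\rho$ takes values in $\{0,1\}$, elements of rank $0$ have negative labels and elements of rank $1$ have positive labels. For $\pi=a_1\cdots a_p$, $\operatorname{des}(\pi)=|\{i\in[p-1]:a_i>a_{i+1}\}|$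 and $\operatorname{peak}(\pi)=|\{2\le i\le p-1:a_{i-1}<a_i>a_{i+1}\}|$. Set $a_0=a_{p+1}=0$; double ascents/descents, peaks and valleys of letters $a_k$ ($k\in[p]$) are taken in $0\pi0$ ($a_{k-1}<a_k<a_{k+1}$, $a_{k-1}>a_k>a_{k+1}$, $a_{k-1}<a_k>a_{k+1}$, $a_{k-1}>a_k<a_{k+1}$ respectively). For $x\in\omega(P)$ define $\psi_x(\pi)$: if $x<0$ is a double descent, move $x$ to between the first pair of consecutive letters $a_i,a_{i+1}$ to the right of $x$ with $a_i<x<a_{i+1}$; if $x<0$ is a double ascent, move $x$ to between the first pair to the left with $a_i>x>a_{i+1}$; if $x>0$ is a double descent, move $x$ to between the first pair to the left with $a_i<x<a_{i+1}$; if $x>0$ is a double ascent, move $x$ to between the first pair to the right with $a_i>x>a_{i+1}$; if $x$ is a peak or valley, $\psi_x(\pi)=\pi$. These maps send $\mathcal{L}(P,\omega)$ to itself and define a $\mathbb{Z}_2^P$-action $\psi_S(\pi)=\prod_{x\in S}\psi_{\omega(x)}(\pi)$, $S\subseteq P$; $\operatorname{Orb}(\pi)$ is the orbit of $\pi$, and it contains a unique element $\hat\pi$ with $0\hat\pi0$ having no double descents. *)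

theory Defs
  imports Complex_Main
begin

definition strict_poset_on :: "'a set \<Rightarrow> ('a \<Rightarrow> 'a \<Rightarrow> bool) \<Rightarrow> bool" where
  "strict_poset_on P lt \<longleftrightarrow>
     (\<forall>x\<in>P. \<not> lt x x) \<and>
     (\<forall>x\<in>P. \<forall>y\<in>P. \<forall>z\<in>P. lt x y \<longrightarrow> lt y z \<longrightarrow> lt x z)"

definition covers :: "'a set \<Rightarrow> ('a \<Rightarrow> 'a \<Rightarrow> bool) \<Rightarrow> 'a \<Rightarrow> 'a \<Rightarrow> bool" where
  "covers P lt x y \<longleftrightarrow> x \<in> P \<and> y \<in> P \<and> lt x y \<and>
     \<not> (\<exists>z\<in>P. lt x z \<and> lt z y)"

definition minimal_in :: "'a set \<Rightarrow> ('a \<Rightarrow> 'a \<Rightarrow> bool) \<Rightarrow> 'a \<Rightarrow> bool" where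
  "minimal_in P lt x \<longleftrightarrow> x \<in> P \<and> \<not> (\<exists>y\<in>P. lt y x)"

definition maximal_in :: "'a set \<Rightarrow> ('a \<Rightarrow> 'a \<Rightarrow> bool) \<Rightarrow> 'a \<Rightarrow> bool" where
  "maximal_in P lt x \<longleftrightarrow> x \<in> P \<and> \<not> (\<exists>y\<in>P. lt x y)"

definition sat_chain_from_min :: "'a set \<Rightarrow> ('a \<Rightarrow> 'a \<Rightarrow> bool) \<Rightarrow> 'a list \<Rightarrow> bool" where
  "sat_chain_from_min P lt c \<longleftrightarrow> c \<noteq> [] \<and> minimal_in P lt (hd c) \<and>
     (\<forall>i. i + 1 < length c \<longrightarrow> covers P lt (c ! i) (c ! (i + 1)))"

definition maximal_chain :: "'a set \<Rightarrow> ('a \<Rightarrow> 'a \<Rightarrow> bool) \<Rightarrow> 'a list \<Rightarrow> bool" where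
  "maximal_chain P lt c \<longleftrightarrow> sat_chain_from_min P lt c \<and> maximal_in P lt (last c)"

definition eps :: "('a \<Rightarrow> int) \<Rightarrow> 'a \<Rightarrow> 'a \<Rightarrow> int" where
  "eps \<omega> x y = (if \<omega> x < \<omega> y then 1 else -1)"

definition eps_sum :: "('a \<Rightarrow> int) \<Rightarrow> 'a list \<Rightarrow> int" where
  "eps_sum \<omega> c = (\<Sum>i<length c - 1. eps \<omega> (c ! i) (c ! (i + 1)))"

definition sign_graded_rank :: "'a set \<Rightarrow> ('a \<Rightarrow> 'a \<Rightarrow> bool) \<Rightarrow> ('a \<Rightarrow> int) \<Rightarrow> int \<Rightarrow> bool" where
  "sign_graded_rank P lt \<omega> r \<longleftrightarrow> (\<forall>c. maximal_chain P lt c \<longrightarrow> eps_sum \<omega> c = r)"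

definition sign_graded :: "'a set \<Rightarrow> ('a \<Rightarrow> 'a \<Rightarrow> bool) \<Rightarrow> ('a \<Rightarrow> int) \<Rightarrow> bool" where
  "sign_graded P lt \<omega> \<longleftrightarrow> (\<exists>r. sign_graded_rank P lt \<omega> r)"

definition rho :: "'a set \<Rightarrow> ('a \<Rightarrow> 'a \<Rightarrow> bool) \<Rightarrow> ('a \<Rightarrow> int) \<Rightarrow> 'a \<Rightarrow> int" where
  "rho P lt \<omega> x = (THE v. \<forall>c. sat_chain_from_min P lt c \<and> last c = x \<longrightarrow> eps_sum \<omega> c = v)"

definition canonical :: "'a set \<Rightarrow> ('a \<Rightarrow> 'a \<Rightarrow> bool) \<Rightarrow> ('a \<Rightarrow> int) \<Rightarrow> bool" where
  "canonical P lt \<omega> \<longleftrightarrow> sign_graded P lt \<omega> \<and>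
     (\<forall>x\<in>P. rho P lt \<omega> x \<in> {0, 1}) \<and>
     (\<forall>x\<in>P. rho P lt \<omega> x = 0 \<longrightarrow> \<omega> x < 0) \<and>
     (\<forall>x\<in>P. rho P lt \<omega> x = 1 \<longrightarrow> \<omega> x > 0)"

definition JH :: "'a set \<Rightarrow> ('a \<Rightarrow> 'a \<Rightarrow> bool) \<Rightarrow> ('a \<Rightarrow> int) \<Rightarrow> int list set" where
  "JH P lt \<omega> = {w. distinct w \<and> set w = \<omega> ` P \<and>
     (\<forall>x\<in>P. \<forall>y\<in>P. lt x y \<longrightarrow>
        (\<exists>i j. i < j \<and> j < length w \<and> w ! i = \<omega> x \<and> w ! j = \<omega> y))}"

definition des :: "int list \<Rightarrow> nat" where
  "des w = card {i. i + 1 < length w \<and> w ! i > w ! (i + 1)}"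

definition peak :: "int list \<Rightarrow> nat" where
  "peak w = card {i. 0 < i \<and> i + 1 < length w \<and> w ! (i - 1) < w ! i \<and> w ! i > w ! (i + 1)}"

definition pad :: "int list \<Rightarrow> int list" where
  "pad w = 0 # w @ [0]"

definition no_dd :: "int list \<Rightarrow> bool" where
  "no_dd w \<longleftrightarrow> \<not> (\<exists>k. 0 < k \<and> k + 1 < length (pad w) \<and>
       pad w ! (k - 1) > pad w ! k \<and> pad w ! k > pad w ! (k + 1))"

text \<open>In a padded word L, move the letter at position k to between positions i and i+1
  (i > k, resp. i + 1 < k).\<close>
definition move_right :: "int list \<Rightarrow> nat \<Rightarrow> nat \<Rightarrow> int list" where
  "move_right L k i = take k L @ take (i - k) (drop (k + 1) L) @ [L ! k] @ drop (i + 1) L"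

definition move_left :: "int list \<Rightarrow> nat \<Rightarrow> nat \<Rightarrow> int list" where
  "move_left L k i = take (i + 1) L @ [L ! k] @ take (k - i - 1) (drop (i + 1) L) @ drop (k + 1) L"

definition strip :: "int list \<Rightarrow> int list" where
  "strip L = butlast (tl L)"

definition psi :: "int \<Rightarrow> int list \<Rightarrow> int list" where
  "psi x w = (let L = pad w; k = (LEAST k. 0 < k \<and> L ! k = x) in
     if x \<notin> set w then w
     else if L ! (k - 1) > x \<and> x > L ! (k + 1) then
       (if x < 0 then
          strip (move_right L k (LEAST i. k < i \<and> i + 1 < length L \<and> L ! i < x \<and> x < L ! (i + 1)))
        else
          strip (move_left L k (GREATEST i. i + 1 < k \<and> L ! i < x \<and> x < L ! (i + 1))))
     else if L ! (k - 1) < x \<and> x < L ! (k + 1) then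
       (if x < 0 then
          strip (move_left L k (GREATEST i. i + 1 < k \<and> L ! i > x \<and> x > L ! (i + 1)))
        else
          strip (move_right L k (LEAST i. k < i \<and> i + 1 < length L \<and> L ! i > x \<and> x > L ! (i + 1))))
     else w)"

definition psiS :: "('a \<Rightarrow> int) \<Rightarrow> 'a set \<Rightarrow> int list \<Rightarrow> int list" where
  "psiS \<omega> S w = fold psi (sorted_list_of_set (\<omega> ` S)) w"

definition Orb :: "'a set \<Rightarrow> ('a \<Rightarrow> int) \<Rightarrow> int list \<Rightarrow> int list set" where
  "Orb P \<omega> w = {psiS \<omega> S w | S. S \<subseteq> P}"

end

theory Submission
  imports Defs
begin


definition lnb :: "int list \<Rightarrow> int \<Rightarrow> int" where
  "lnb L y = last (takeWhile (\<lambda>z. z \<noteq> y) L)"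
definition rnb :: "int list \<Rightarrow> int \<Rightarrow> int" where
  "rnb L y = hd (tl (dropWhile (\<lambda>z. z \<noteq> y) L))"
definition Lb :: "int list \<Rightarrow> int \<Rightarrow> bool" where
  "Lb w y \<longleftrightarrow> lnb (pad w) y < y"
definition Rb :: "int list \<Rightarrow> int \<Rightarrow> bool" where
  "Rb w y \<longleftrightarrow> rnb (pad w) y < y"

definition good :: "int list \<Rightarrow> bool" where
  "good w \<longleftrightarrow> distinct w \<and> 0 \<notin> set w"

lemma lnb_split: "lnb (U @ y # V) y = last U" if "y \<notin> set U"
proof -
  have "takeWhile (\<lambda>z. z \<noteq> y) (U @ y # V) = U"
    by (rule trans[OF takeWhile_append2]) (use that in auto)
  then show ?thesis unfolding lnb_def by simp
qed
lemma rnb_split: "rnb (U @ y # V) y = hd V" if "y \<notin> set U"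
proof -
  have "dropWhile (\<lambda>z. z \<noteq> y) (U @ y # V) = y # V"
    by (rule trans[OF dropWhile_append2]) (use that in auto)
  then show ?thesis unfolding rnb_def by simp
qed

lemma nb_word:
  assumes "y \<notin> set U" "y \<noteq> 0"
  shows "lnb (pad (U @ y # V)) y = (if U = [] then 0 else last U)"
    "rnb (pad (U @ y # V)) y = (if V = [] then 0 else hd V)"
proof -
  have e: "pad (U @ y # V) = (0 # U) @ y # (V @ [0])" by (simp add: pad_def)
  show "lnb (pad (U @ y # V)) y = (if U = [] then 0 else last U)"
    unfolding e using assms by (subst lnb_split) auto
  show "rnb (pad (U @ y # V)) y = (if V = [] then 0 else hd V)"
    unfolding e using assms by (subst rnb_split) auto
qed

lemma nb_idx:
  assumes "good w" "i < length w"
  shows "lnb (pad w) (w ! i) = pad w ! i" "rnb (pad w) (w ! i) = pad w ! (i + 2)"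
    "pad w ! (i+1) = w ! i"
proof -
  have w: "w = take i w @ w ! i # drop (Suc i) w" using assms(2) by (simp add: id_take_nth_drop)
  have ni: "w ! i \<notin> set (take i w)" using assms
    by (metis good_def distinct_append w not_distinct_conv_prefix)
  have nz: "w ! i \<noteq> 0" using assms good_def nth_mem by metis
  have "lnb (pad w) (w ! i) = (if take i w = [] then 0 else last (take i w))"
    using nb_word(1)[OF ni nz, of "drop (Suc i) w"] w by simp
  also have "\<dots> = pad w ! i" using assms(2)
    by (cases i) (auto simp: pad_def nth_append last_conv_nth min_def)
  finally show "lnb (pad w) (w ! i) = pad w ! i" .
  have "rnb (pad w) (w ! i) = (if drop (Suc i) w = [] then 0 else hd (drop (Suc i) w))"
    using nb_word(2)[OF ni nz, of "drop (Suc i) w"] w by simp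
  also have "\<dots> = pad w ! (i+2)" using assms(2)
    by (auto simp: pad_def nth_append hd_drop_conv_nth)
  finally show "rnb (pad w) (w ! i) = pad w ! (i+2)" .
  show "pad w ! (i+1) = w ! i" using assms(2) by (simp add: pad_def nth_append)
qed

lemma core:
  assumes w1: "w1 = A @ x # B @ C" and w2: "w2 = A @ B @ x # C"
  and g: "good w1" and Bne: "B \<noteq> []"
  and ori: "(x < 0 \<and> last (0#A) > x \<and> hd B < x \<and> last B < x \<and> hd (C@[0]) > x) \<or>
            (x > 0 \<and> last (0#A) < x \<and> hd B > x \<and> last B > x \<and> hd (C@[0]) < x)"
  shows "good w2" "set w2 = set w1" "length w2 = length w1"
   "\<forall>y\<in>set w1. y \<noteq> x \<longrightarrow> (Lb w2 y \<longleftrightarrow> Lb w1 y) \<and> (Rb w2 y \<longleftrightarrow> Rb w1 y)"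
   "Lb w2 x \<longleftrightarrow> \<not> Lb w1 x" "Rb w2 x \<longleftrightarrow> \<not> Rb w1 x" "Lb w1 x \<noteq> Rb w1 x"
   "hd w2 < 0 \<longleftrightarrow> hd w1 < 0" "last w2 > 0 \<longleftrightarrow> last w1 > 0"
proof -
  show "good w2" "set w2 = set w1" "length w2 = length w1" using g unfolding w1 w2 good_def by auto
  have dA: "distinct (A @ x # B @ C)" and nz: "0 \<notin> set (A @ x # B @ C)" using g w1 good_def by auto
  have x0: "x \<noteq> 0" using nz by auto
  have xn: "x \<notin> set A" "x \<notin> set (A @ B)" using dA by auto
  have e1: "w1 = A @ x # (B @ C)" "w2 = (A @ B) @ x # C" using w1 w2 by auto
  have hB: "hd (B @ C) = hd B" "last (0 # A @ B) = last B" using Bne by auto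
  show "Lb w2 x \<longleftrightarrow> \<not> Lb w1 x" "Rb w2 x \<longleftrightarrow> \<not> Rb w1 x" "Lb w1 x \<noteq> Rb w1 x"
    unfolding Lb_def Rb_def e1 using nb_word[OF xn(1) x0, of "B @ C"] nb_word[OF xn(2) x0, of C] ori Bne hB
    by (auto split: if_splits)
  show "hd w2 < 0 \<longleftrightarrow> hd w1 < 0" "last w2 > 0 \<longleftrightarrow> last w1 > 0"
    using ori Bne unfolding w1 w2 by (auto simp: hd_append last_append)
  show "\<forall>y\<in>set w1. y \<noteq> x \<longrightarrow> (Lb w2 y \<longleftrightarrow> Lb w1 y) \<and> (Rb w2 y \<longleftrightarrow> Rb w1 y)"
  proof (intro ballI impI)
    fix y assume y: "y \<in> set w1" "y \<noteq> x"
    let ?G = "(Lb w2 y \<longleftrightarrow> Lb w1 y) \<and> (Rb w2 y \<longleftrightarrow> Rb w1 y)"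
    have y0: "y \<noteq> 0" using y nz w1 by auto
    have "y \<in> set A \<or> y \<in> set B \<or> y \<in> set C" using y w1 by auto
    moreover
    { assume "y \<in> set A"
      then obtain U V where A: "A = U @ y # V" by (meson split_list)
      have u: "y \<notin> set U" using dA A by auto
      have f: "w1 = U @ y # (V @ x # B @ C)" "w2 = U @ y # (V @ B @ x # C)" using w1 w2 A by auto
      have ?G unfolding Lb_def Rb_def f nb_word[OF u y0] using ori Bne A
        by (cases "V = []") (auto simp: hd_append) }
    moreover
    { assume "y \<in> set B"
      then obtain U V where B: "B = U @ y # V" by (meson split_list)
      have u: "y \<notin> set (A @ x # U)" "y \<notin> set (A @ U)" using dA B y by auto
      have f: "w1 = (A @ x # U) @ y # (V @ C)" "w2 = (A @ U) @ y # (V @ x # C)" using w1 w2 B by auto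
      have ?G unfolding Lb_def Rb_def f nb_word[OF u(1) y0] nb_word[OF u(2) y0] using ori B
        by (cases "V = []"; cases "U = []") (auto simp: hd_append last_append) }
    moreover
    { assume "y \<in> set C"
      then obtain U V where C: "C = U @ y # V" by (meson split_list)
      have u: "y \<notin> set (A @ x # B @ U)" "y \<notin> set (A @ B @ x # U)" using dA C y by auto
      have f: "w1 = (A @ x # B @ U) @ y # V" "w2 = (A @ B @ x # U) @ y # V" using w1 w2 C by auto
      have ?G unfolding Lb_def Rb_def f nb_word[OF u(1) y0] nb_word[OF u(2) y0] using ori C Bne
        by (cases "U = []") (auto simp: hd_append last_append) }
    ultimately show "(Lb w2 y \<longleftrightarrow> Lb w1 y) \<and> (Rb w2 y \<longleftrightarrow> Rb w1 y)" by blast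
  qed
qed



lemma strip_pad[simp]: "strip (pad u) = u" by (simp add: strip_def pad_def)

lemma move_right_pad: assumes "j < length w" "Suc j < i" "i \<le> length w"
  shows "move_right (pad w) (Suc j) i = pad (take j w @ take (i - Suc j) (drop (Suc j) w) @ w!j # drop i w)"
proof -
  have 1: "take (Suc j) (pad w) = 0 # take j w" using assms by (simp add: pad_def)
  have 2: "drop (Suc j + 1) (pad w) = drop (Suc j) w @ [0]" using assms by (simp add: pad_def)
  have 3: "take (i - Suc j) (drop (Suc j) w @ [0]) = take (i - Suc j) (drop (Suc j) w)"
    using assms by simp
  have 4: "pad w ! Suc j = w ! j" using assms by (simp add: pad_def nth_append)
  have 5: "drop (i + 1) (pad w) = drop i w @ [0]" using assms by (simp add: pad_def)
  show ?thesis unfolding move_right_def 1 2 3 4 5 by (simp add: pad_def)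
qed

lemma move_left_pad: assumes "i < j" "j < length w"
  shows "move_left (pad w) (Suc j) i = pad (take i w @ w!j # take (j - i) (drop i w) @ drop (Suc j) w)"
proof -
  have 1: "take (i + 1) (pad w) = 0 # take i w" using assms by (simp add: pad_def)
  have 2: "drop (i + 1) (pad w) = drop i w @ [0]" using assms by (simp add: pad_def)
  have 3: "take (Suc j - i - 1) (drop i w @ [0]) = take (j - i) (drop i w)"
    using assms by simp
  have 4: "pad w ! Suc j = w ! j" using assms by (simp add: pad_def nth_append)
  have 5: "drop (Suc j + 1) (pad w) = drop (Suc j) w @ [0]" using assms by (simp add: pad_def)
  show ?thesis unfolding move_left_def 1 2 3 4 5 by (simp add: pad_def)
qed

lemma decomp_r: assumes "j < length w" "Suc j < i" "i \<le> length w"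
  shows "w = take j w @ w!j # take (i - Suc j) (drop (Suc j) w) @ drop i w"
proof -
  have "w = take j w @ w!j # drop (Suc j) w" using assms by (simp add: id_take_nth_drop)
  also have "drop (Suc j) w = take (i - Suc j) (drop (Suc j) w) @ drop i w"
    using assms by (metis append_take_drop_id drop_drop le_add_diff_inverse2 less_imp_le_nat)
  finally show ?thesis by simp
qed

lemma decomp_l: assumes "i < j" "j < length w"
  shows "w = take i w @ take (j-i) (drop i w) @ w!j # drop (Suc j) w"
proof -
  have "w = take j w @ w!j # drop (Suc j) w" using assms by (simp add: id_take_nth_drop)
  also have "take j w = take i w @ take (j-i) (drop i w)" using assms
    by (metis add_diff_inverse_nat not_less_iff_gr_or_eq order.asym take_add)
  finally show ?thesis by simp
qed

lemma lastA: "j \<le> length w \<Longrightarrow> last (0 # take j w) = pad w ! j"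
  by (cases j) (auto simp: pad_def nth_append last_conv_nth min_def)

lemma hdC: "i \<le> length w \<Longrightarrow> hd (drop i w @ [0]) = pad w ! Suc i"
  by (auto simp: pad_def nth_append hd_drop_conv_nth hd_append)

lemma hdB: assumes "a < b" "b \<le> length w"
  shows "hd (take (b - a) (drop a w)) = pad w ! Suc a" "last (take (b - a) (drop a w)) = pad w ! b"
    "take (b - a) (drop a w) \<noteq> []"
  using assms by (auto simp: pad_def nth_append hd_drop_conv_nth last_conv_nth)



definition ori :: "int list \<Rightarrow> int list \<Rightarrow> int list \<Rightarrow> int \<Rightarrow> bool" where
  "ori A B C x \<longleftrightarrow> (x < 0 \<and> last (0#A) > x \<and> hd B < x \<and> last B < x \<and> hd (C@[0]) > x) \<or>
            (x > 0 \<and> last (0#A) < x \<and> hd B > x \<and> last B > x \<and> hd (C@[0]) < x)"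

lemma ivt: assumes "Q a" "\<not> Q b" "a \<le> b"
  shows "\<exists>i. a \<le> i \<and> i < b \<and> Q i \<and> \<not> Q (Suc i)"
  using assms
proof (induction b)
  case 0 then show ?case by auto
next
  case (Suc b)
  show ?case
  proof (cases "Q b")
    case True then show ?thesis using Suc by (intro exI[of _ b]) (auto simp: le_Suc_eq)
  next
    case False
    then have "a \<noteq> Suc b" using Suc by auto
    then obtain i where "a \<le> i \<and> i < b \<and> Q i \<and> \<not> Q (Suc i)" using Suc False by fastforce
    then show ?thesis by (intro exI[of _ i]) auto
  qed
qed

lemma pad_nth_eq: assumes "good w" "j < length w" "m < length (pad w)" "pad w ! m = w ! j"
  shows "m = Suc j"
proof (cases m)
  case 0 then show ?thesis using assms nth_mem[OF assms(2)] by (auto simp: pad_def good_def)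
next
  case (Suc m')
  show ?thesis
  proof (cases "m' < length w")
    case True
    then have "w ! m' = w ! j" using assms Suc by (simp add: pad_def nth_append)
    then show ?thesis using assms True Suc by (simp add: good_def nth_eq_iff_index_eq)
  next
    case False
    then have "pad w ! m = 0" using assms Suc by (simp add: pad_def nth_append)
    then show ?thesis using assms nth_mem[OF assms(2)] by (auto simp: good_def)
  qed
qed

lemma len_pad[simp]: "length (pad w) = length w + 2" by (simp add: pad_def)

lemma pad_last: "pad w ! Suc (length w) = 0" by (simp add: pad_def nth_append)
lemma pad_0: "pad w ! 0 = 0" by (simp add: pad_def)

lemma psi_main:
  assumes g: "good w" and xw: "x \<in> set w"
  shows "(Lb w x = Rb w x \<longrightarrow> psi x w = w) \<and>
         (Lb w x \<noteq> Rb w x \<longrightarrow> (\<exists>A B C. B \<noteq> [] \<and> ori A B C x \<and>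
            ((w = A@x#B@C \<and> psi x w = A@B@x#C) \<or> (w = A@B@x#C \<and> psi x w = A@x#B@C))))"
proof -
  obtain j where j: "j < length w" "w ! j = x" using xw by (meson in_set_conv_nth)
  define L where "L = pad w"
  have x0: "x \<noteq> 0" using g xw by (auto simp: good_def)
  have K: "(LEAST k. 0 < k \<and> L ! k = x) = Suc j"
  proof (rule Least_equality)
    show "0 < Suc j \<and> L ! Suc j = x" using j by (simp add: L_def pad_def nth_append)
    fix y assume "0 < y \<and> L ! y = x"
    then show "Suc j \<le> y"
    proof (rule_tac ccontr)
      assume a: "0 < y \<and> L ! y = x" "\<not> Suc j \<le> y"
      then have "y < length (pad w)" using j by simp
      then have "y = Suc j" using pad_nth_eq[OF g j(1), of y] a j L_def by simp
      then show False using a by simp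
    qed
  qed
  have nb: "lnb L x = L ! j" "rnb L x = L ! Suc (Suc j)"
    using nb_idx[OF g j(1)] j L_def by auto
  have lnx: "L ! j \<noteq> x" using pad_nth_eq[OF g j(1), of j] j L_def by auto
  have rnx: "L ! Suc (Suc j) \<noteq> x" using pad_nth_eq[OF g j(1), of "Suc (Suc j)"] j L_def by auto
  have LbE: "Lb w x \<longleftrightarrow> L ! j < x" and RbE: "Rb w x \<longleftrightarrow> L ! Suc (Suc j) < x"
    using nb by (auto simp: Lb_def Rb_def L_def)
  have psiE: "psi x w = (if L ! j > x \<and> x > L ! Suc (Suc j) then
       (if x < 0 then
          strip (move_right L (Suc j) (LEAST i. Suc j < i \<and> i + 1 < length L \<and> L ! i < x \<and> x < L ! (i + 1)))
        else
          strip (move_left L (Suc j) (GREATEST i. i + 1 < Suc j \<and> L ! i < x \<and> x < L ! (i + 1))))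
     else if L ! j < x \<and> x < L ! Suc (Suc j) then
       (if x < 0 then
          strip (move_left L (Suc j) (GREATEST i. i + 1 < Suc j \<and> L ! i > x \<and> x > L ! (i + 1)))
        else
          strip (move_right L (Suc j) (LEAST i. Suc j < i \<and> i + 1 < length L \<and> L ! i > x \<and> x > L ! (i + 1))))
     else w)"
  proof -
    have e: "Suc j - 1 = j" "Suc j + 1 = Suc (Suc j)" by auto
    have "x \<in> set w" by (rule xw)
    then show ?thesis unfolding psi_def Let_def L_def[symmetric] K e if_not_P[of "x \<notin> set w"] by simp
  qed
  show ?thesis
  proof (intro conjI impI)
    assume "Lb w x = Rb w x"
    then show "psi x w = w" unfolding psiE using LbE RbE by auto
  next
    assume dbl: "Lb w x \<noteq> Rb w x"
    show "\<exists>A B C. B \<noteq> [] \<and> ori A B C x \<and>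
            ((w = A@x#B@C \<and> psi x w = A@B@x#C) \<or> (w = A@B@x#C \<and> psi x w = A@x#B@C))"
    proof (cases "L ! j > x \<and> x > L ! Suc (Suc j)")
      case c1: True
      show ?thesis
      proof (cases "x < 0")
        case neg: True
        let ?P = "\<lambda>i. Suc j < i \<and> i + 1 < length L \<and> L ! i < x \<and> x < L ! (i + 1)"
        obtain i where i: "Suc (Suc j) \<le> i" "i < Suc (length w)" "L ! i < x" "\<not> L ! Suc i < x"
          using ivt[of "\<lambda>m. L ! m < x" "Suc (Suc j)" "Suc (length w)"] c1 neg j
          by (auto simp: L_def pad_last)
        have "L ! Suc i \<noteq> x" using pad_nth_eq[OF g j(1), of "Suc i"] i j L_def by auto
        then have "?P i" using i by (auto simp: L_def)
        define i0 where "i0 = (LEAST i. ?P i)"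
        have P0: "?P i0" unfolding i0_def by (rule LeastI[of ?P i]) fact
        define B where "B = take (i0 - Suc j) (drop (Suc j) w)"
        have i0l: "i0 \<le> length w" using P0 by (simp add: L_def)
        have ps: "psi x w = take j w @ B @ x # drop i0 w"
          unfolding psiE i0_def[symmetric] using c1 neg move_right_pad[OF j(1) _ i0l] P0 j
          by (simp add: L_def B_def)
        have ww: "w = take j w @ x # B @ drop i0 w" using decomp_r[OF j(1) _ i0l] P0 j B_def by simp
        have o: "ori (take j w) B (drop i0 w) x"
          unfolding ori_def B_def using lastA[of j w] hdC[OF i0l] hdB[of "Suc j" i0 w] P0 j c1 neg
          by (auto simp: L_def)
        show ?thesis using ps ww o hdB[of "Suc j" i0 w] P0 i0l unfolding B_def by blast
      next
        case pos: False
        then have pos: "x > 0" using x0 by simp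
        let ?P = "\<lambda>i. i + 1 < Suc j \<and> L ! i < x \<and> x < L ! (i + 1)"
        obtain i where i: "i < j" "L ! i < x" "\<not> L ! Suc i < x"
          using ivt[of "\<lambda>m. L ! m < x" 0 j] c1 pos j
          by (auto simp: L_def pad_0)
        have "L ! Suc i \<noteq> x" using pad_nth_eq[OF g j(1), of "Suc i"] i j L_def by auto
        then have "?P i" using i by (auto simp: L_def)
        define i0 where "i0 = (GREATEST i. ?P i)"
        have P0: "?P i0" unfolding i0_def by (rule GreatestI_ex_nat[of ?P j]) (use \<open>?P i\<close> in auto)
        define B where "B = take (j - i0) (drop i0 w)"
        have i0l: "i0 < j" using P0 by simp
        have ps: "psi x w = take i0 w @ x # B @ drop (Suc j) w"
          unfolding psiE i0_def[symmetric] using c1 pos move_left_pad[OF i0l j(1)] P0 j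
          by (simp add: L_def B_def)
        have ww: "w = take i0 w @ B @ x # drop (Suc j) w" using decomp_l[OF i0l j(1)] P0 j B_def by simp
        have o: "ori (take i0 w) B (drop (Suc j) w) x"
          unfolding ori_def B_def using lastA[of i0 w] hdC[of "Suc j" w] hdB[of i0 j w] P0 j c1 pos
          by (auto simp: L_def)
        have Bn: "B \<noteq> []" unfolding B_def using hdB(3)[of i0 j w] i0l j by simp
        show ?thesis
          by (rule exI[of _ "take i0 w"], rule exI[of _ B], rule exI[of _ "drop (Suc j) w"])
            (use ps ww o Bn in blast)
      qed
    next
      case c2: False
      then have c2: "L ! j < x \<and> x < L ! Suc (Suc j)" using dbl LbE RbE lnx rnx by auto
      show ?thesis
      proof (cases "x < 0")
        case neg: True
        let ?P = "\<lambda>i. i + 1 < Suc j \<and> L ! i > x \<and> x > L ! (i + 1)"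
        obtain i where i: "i < j" "L ! i > x" "\<not> L ! Suc i > x"
          using ivt[of "\<lambda>m. L ! m > x" 0 j] c2 neg j
          by (auto simp: L_def pad_0)
        have "L ! Suc i \<noteq> x" using pad_nth_eq[OF g j(1), of "Suc i"] i j L_def by auto
        then have "?P i" using i by (auto simp: L_def)
        define i0 where "i0 = (GREATEST i. ?P i)"
        have P0: "?P i0" unfolding i0_def by (rule GreatestI_ex_nat[of ?P j]) (use \<open>?P i\<close> in auto)
        define B where "B = take (j - i0) (drop i0 w)"
        have i0l: "i0 < j" using P0 by simp
        have ps: "psi x w = take i0 w @ x # B @ drop (Suc j) w"
          unfolding psiE i0_def[symmetric] using c2 neg move_left_pad[OF i0l j(1)] P0 j
          by (simp add: L_def B_def)
        have ww: "w = take i0 w @ B @ x # drop (Suc j) w" using decomp_l[OF i0l j(1)] P0 j B_def by simp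
        have o: "ori (take i0 w) B (drop (Suc j) w) x"
          unfolding ori_def B_def using lastA[of i0 w] hdC[of "Suc j" w] hdB[of i0 j w] P0 j c2 neg
          by (auto simp: L_def)
        have Bn: "B \<noteq> []" unfolding B_def using hdB(3)[of i0 j w] i0l j by simp
        show ?thesis
          by (rule exI[of _ "take i0 w"], rule exI[of _ B], rule exI[of _ "drop (Suc j) w"])
            (use ps ww o Bn in blast)
      next
        case pos: False
        then have pos: "x > 0" using x0 by simp
        let ?P = "\<lambda>i. Suc j < i \<and> i + 1 < length L \<and> L ! i > x \<and> x > L ! (i + 1)"
        obtain i where i: "Suc (Suc j) \<le> i" "i < Suc (length w)" "L ! i > x" "\<not> L ! Suc i > x"
          using ivt[of "\<lambda>m. L ! m > x" "Suc (Suc j)" "Suc (length w)"] c2 pos j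
          by (auto simp: L_def pad_last)
        have "L ! Suc i \<noteq> x" using pad_nth_eq[OF g j(1), of "Suc i"] i j L_def by auto
        then have "?P i" using i by (auto simp: L_def)
        define i0 where "i0 = (LEAST i. ?P i)"
        have P0: "?P i0" unfolding i0_def by (rule LeastI[of ?P i]) fact
        define B where "B = take (i0 - Suc j) (drop (Suc j) w)"
        have i0l: "i0 \<le> length w" using P0 by (simp add: L_def)
        have ps: "psi x w = take j w @ B @ x # drop i0 w"
          unfolding psiE i0_def[symmetric] using c2 pos move_right_pad[OF j(1) _ i0l] P0 j
          by (simp add: L_def B_def)
        have ww: "w = take j w @ x # B @ drop i0 w" using decomp_r[OF j(1) _ i0l] P0 j B_def by simp
        have o: "ori (take j w) B (drop i0 w) x"
          unfolding ori_def B_def using lastA[of j w] hdC[OF i0l] hdB[of "Suc j" i0 w] P0 j c2 pos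
          by (auto simp: L_def)
        show ?thesis using ps ww o hdB[of "Suc j" i0 w] P0 i0l unfolding B_def by blast
      qed
    qed
  qed
qed



definition Dbl :: "int list \<Rightarrow> int set" where
  "Dbl w = {y \<in> set w. Lb w y \<noteq> Rb w y}"

definition inv_ok :: "int list \<Rightarrow> int list \<Rightarrow> bool" where
  "inv_ok w w' \<longleftrightarrow> good w' \<and> set w' = set w \<and> length w' = length w \<and>
     (hd w' < 0 \<longleftrightarrow> hd w < 0) \<and> (last w' > 0 \<longleftrightarrow> last w > 0)"

lemma inv_ok_refl: "good w \<Longrightarrow> inv_ok w w" by (simp add: inv_ok_def)
lemma inv_ok_trans: "inv_ok w w' \<Longrightarrow> inv_ok w' w'' \<Longrightarrow> inv_ok w w''" by (simp add: inv_ok_def)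

lemma psi_step:
  assumes g: "good w"
  shows "inv_ok w (psi x w)"
    "\<forall>y\<in>set w. y \<noteq> x \<longrightarrow> (Lb (psi x w) y \<longleftrightarrow> Lb w y) \<and> (Rb (psi x w) y \<longleftrightarrow> Rb w y)"
    "x \<in> Dbl w \<Longrightarrow> (Lb (psi x w) x \<longleftrightarrow> \<not> Lb w x) \<and> (Rb (psi x w) x \<longleftrightarrow> \<not> Rb w x)"
    "x \<notin> Dbl w \<Longrightarrow> psi x w = w"
proof -
  have id: "psi x w = w" if "x \<notin> Dbl w"
  proof (cases "x \<in> set w")
    case True then show ?thesis using psi_main[OF g True] that by (auto simp: Dbl_def)
  next
    case False then show ?thesis by (simp add: psi_def)
  qed
  then show "x \<notin> Dbl w \<Longrightarrow> psi x w = w" .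
  have "inv_ok w (psi x w) \<and>
    (\<forall>y\<in>set w. y \<noteq> x \<longrightarrow> (Lb (psi x w) y \<longleftrightarrow> Lb w y) \<and> (Rb (psi x w) y \<longleftrightarrow> Rb w y)) \<and>
    (x \<in> Dbl w \<longrightarrow> (Lb (psi x w) x \<longleftrightarrow> \<not> Lb w x) \<and> (Rb (psi x w) x \<longleftrightarrow> \<not> Rb w x))"
  proof (cases "x \<in> Dbl w")
    case False then show ?thesis using id inv_ok_refl[OF g] by auto
  next
    case True
    then have xw: "x \<in> set w" and d: "Lb w x \<noteq> Rb w x" by (auto simp: Dbl_def)
    obtain A B C where B: "B \<noteq> []" and o: "ori A B C x" and
      c: "(w = A@x#B@C \<and> psi x w = A@B@x#C) \<or> (w = A@B@x#C \<and> psi x w = A@x#B@C)"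
      using psi_main[OF g xw] d by blast
    from c show ?thesis
    proof
      assume h: "w = A@x#B@C \<and> psi x w = A@B@x#C"
      note cr = core[of w A x B C "psi x w", OF conjunct1[OF h] conjunct2[OF h] g B o[unfolded ori_def]]
      show ?thesis using cr True unfolding inv_ok_def by auto
    next
      assume h: "w = A@B@x#C \<and> psi x w = A@x#B@C"
      have g1: "good (psi x w)" using g h by (auto simp: good_def)
      note cr = core[of "psi x w" A x B C w, OF conjunct2[OF h] conjunct1[OF h] g1 B o[unfolded ori_def]]
      show ?thesis using cr True g1 unfolding inv_ok_def by auto
    qed
  qed
  then show "inv_ok w (psi x w)"
    "\<forall>y\<in>set w. y \<noteq> x \<longrightarrow> (Lb (psi x w) y \<longleftrightarrow> Lb w y) \<and> (Rb (psi x w) y \<longleftrightarrow> Rb w y)"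
    "x \<in> Dbl w \<Longrightarrow> (Lb (psi x w) x \<longleftrightarrow> \<not> Lb w x) \<and> (Rb (psi x w) x \<longleftrightarrow> \<not> Rb w x)"
    by auto
qed

lemma Dbl_psi: "good w \<Longrightarrow> Dbl (psi x w) = Dbl w"
  using psi_step[of w x] unfolding Dbl_def inv_ok_def by (cases "x \<in> Dbl w") (auto simp: Dbl_def)

lemma fold_psi:
  assumes "good w" "distinct xs"
  shows "inv_ok w (fold psi xs w) \<and> Dbl (fold psi xs w) = Dbl w \<and>
    (\<forall>y\<in>set w. (Lb (fold psi xs w) y \<longleftrightarrow> (if y \<in> set xs \<and> y \<in> Dbl w then \<not> Lb w y else Lb w y)) \<and>
                (Rb (fold psi xs w) y \<longleftrightarrow> (if y \<in> set xs \<and> y \<in> Dbl w then \<not> Rb w y else Rb w y)))"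
  using assms
proof (induction xs arbitrary: w)
  case Nil then show ?case by (simp add: inv_ok_refl)
next
  case (Cons x xs)
  let ?v = "psi x w"
  have s: "inv_ok w ?v" "\<forall>y\<in>set w. y \<noteq> x \<longrightarrow> (Lb ?v y \<longleftrightarrow> Lb w y) \<and> (Rb ?v y \<longleftrightarrow> Rb w y)"
    "x \<in> Dbl w \<Longrightarrow> (Lb ?v x \<longleftrightarrow> \<not> Lb w x) \<and> (Rb ?v x \<longleftrightarrow> \<not> Rb w x)"
    "x \<notin> Dbl w \<Longrightarrow> ?v = w" using psi_step[OF Cons.prems(1)] by auto
  have gv: "good ?v" and sv: "set ?v = set w" using s(1) by (auto simp: inv_ok_def)
  have dv: "Dbl ?v = Dbl w" using Dbl_psi[OF Cons.prems(1)] .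
  have IH: "inv_ok ?v (fold psi xs ?v) \<and> Dbl (fold psi xs ?v) = Dbl ?v \<and>
    (\<forall>y\<in>set ?v. (Lb (fold psi xs ?v) y \<longleftrightarrow> (if y \<in> set xs \<and> y \<in> Dbl ?v then \<not> Lb ?v y else Lb ?v y)) \<and>
                (Rb (fold psi xs ?v) y \<longleftrightarrow> (if y \<in> set xs \<and> y \<in> Dbl ?v then \<not> Rb ?v y else Rb ?v y)))"
    using Cons.IH[OF gv] Cons.prems(2) by auto
  have xn: "x \<notin> set xs" using Cons.prems(2) by auto
  show ?case
  proof (intro conjI ballI)
    show "inv_ok w (fold psi (x # xs) w)" using IH s(1) inv_ok_trans by auto
    show "Dbl (fold psi (x # xs) w) = Dbl w" using IH dv by auto
  next
    fix y assume y: "y \<in> set w"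
    show "(Lb (fold psi (x # xs) w) y \<longleftrightarrow> (if y \<in> set (x # xs) \<and> y \<in> Dbl w then \<not> Lb w y else Lb w y))"
      using IH y sv dv s(2,3,4) xn by (cases "y = x"; cases "x \<in> Dbl w") auto
    show "(Rb (fold psi (x # xs) w) y \<longleftrightarrow> (if y \<in> set (x # xs) \<and> y \<in> Dbl w then \<not> Rb w y else Rb w y))"
      using IH y sv dv s(2,3,4) xn by (cases "y = x"; cases "x \<in> Dbl w") auto
  qed
qed

lemma fold_filter:
  assumes "good w"
  shows "fold psi xs w = fold psi (filter (\<lambda>x. x \<in> Dbl w) xs) w"
  using assms
proof (induction xs arbitrary: w)
  case Nil then show ?case by simp
next
  case (Cons x xs)
  have g: "good (psi x w)" using psi_step(1)[OF Cons.prems] by (simp add: inv_ok_def)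
  show ?case
  proof (cases "x \<in> Dbl w")
    case True then show ?thesis using Cons.IH[OF g] Dbl_psi[OF Cons.prems] by simp
  next
    case False then show ?thesis using Cons.IH[OF Cons.prems] psi_step(4)[OF Cons.prems] by simp
  qed
qed



lemma card_set_nth: assumes "distinct w"
  shows "card {y \<in> set w. Q y} = card {i. i < length w \<and> Q (w ! i)}"
proof -
  have "{y \<in> set w. Q y} = (\<lambda>i. w ! i) ` {i. i < length w \<and> Q (w ! i)}"
    by (auto simp: in_set_conv_nth)
  moreover have "inj_on (\<lambda>i. w ! i) {i. i < length w \<and> Q (w ! i)}"
    using inj_on_nth[OF assms] by auto
  ultimately show ?thesis by (simp add: card_image)
qed

lemma Lb_idx: assumes "good w" "i < length w"
  shows "Lb w (w ! i) \<longleftrightarrow> (if i = 0 then 0 else w ! (i - 1)) < w ! i"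
  using nb_idx(1)[OF assms] assms(2) unfolding Lb_def
  by (cases i) (auto simp: pad_def nth_append)

lemma Rb_idx: assumes "good w" "i < length w"
  shows "Rb w (w ! i) \<longleftrightarrow> (if i + 1 = length w then 0 else w ! (i + 1)) < w ! i"
  using nb_idx(2)[OF assms] assms(2) unfolding Rb_def
  by (auto simp: pad_def nth_append)

lemma C1: assumes g: "good w" and ne: "w \<noteq> []"
  shows "card {y \<in> set w. Rb w y} = des w + (if last w > 0 then 1 else 0)"
proof -
  let ?n = "length w"
  have d: "distinct w" using g by (simp add: good_def)
  let ?Ds = "{i. i + 1 < ?n \<and> w ! i > w ! (i + 1)}"
  have fin: "finite ?Ds" by (rule finite_subset[of _ "{..<?n}"]) auto
  have "i \<in> {i. i < ?n \<and> Rb w (w ! i)} \<longleftrightarrow> i \<in> ?Ds \<union> (if 0 < w ! (?n - 1) then {?n - 1} else {})" for i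
  proof (cases "Suc i = ?n")
    case True
    then have "i = ?n - 1" by simp
    then show ?thesis using Rb_idx[OF g, of i] True fin by auto
  next
    case False
    then show ?thesis using Rb_idx[OF g, of i] ne by auto
  qed
  then have "{i. i < ?n \<and> Rb w (w ! i)} = ?Ds \<union> (if 0 < w ! (?n - 1) then {?n - 1} else {})" by blast
  moreover have "card (?Ds \<union> (if 0 < w ! (?n - 1) then {?n - 1} else {})) = des w + (if last w > 0 then 1 else 0)"
  proof -
    have l: "last w = w ! (?n - 1)" using ne by (simp add: last_conv_nth)
    have nin: "?n - 1 \<notin> ?Ds" by auto
    show ?thesis unfolding l des_def using fin nin by (cases "0 < w ! (?n - 1)") simp_all
  qed
  ultimately show ?thesis using card_set_nth[OF d] by simp
qed

lemma C1': assumes g: "good w" and ne: "w \<noteq> []"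
  shows "card {y \<in> set w. Lb w y} + des w + 1 = length w + (if hd w > 0 then 1 else 0)"
proof -
  let ?n = "length w"
  have d: "distinct w" using g by (simp add: good_def)
  let ?As = "{i. i + 1 < ?n \<and> w ! i < w ! (i + 1)}"
  let ?Ds = "{i. i + 1 < ?n \<and> w ! i > w ! (i + 1)}"
  have neq: "w ! i \<noteq> w ! (i + 1)" if "i + 1 < ?n" for i
    using d that by (simp add: nth_eq_iff_index_eq)
  have part: "?As \<union> ?Ds = {..< ?n - 1}" "?As \<inter> ?Ds = {}"
    using neq by (auto simp: less_diff_conv) (meson linorder_neqE)
  have cAD: "card ?As + card ?Ds = ?n - 1"
  proof -
    have "finite ?As" "finite ?Ds" by (rule finite_subset[of _ "{..<?n}"], auto)+
    then show ?thesis using card_Un_disjoint[of ?As ?Ds] part by auto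
  qed
  have e: "{i. i < ?n \<and> Lb w (w ! i)} = (if 0 < w ! 0 then {0} else {}) \<union> Suc ` ?As"
  proof -
    have "i \<in> {i. i < ?n \<and> Lb w (w ! i)} \<longleftrightarrow> i \<in> (if 0 < w ! 0 then {0} else {}) \<union> Suc ` ?As" for i
      using Lb_idx[OF g, of i] ne by (cases i) auto
    then show ?thesis by blast
  qed
  have "card {i. i < ?n \<and> Lb w (w ! i)} = (if 0 < w ! 0 then 1 else 0) + card ?As"
  proof -
    have fin: "finite ?As" by (rule finite_subset[of _ "{..<?n}"]) auto
    show ?thesis unfolding e using fin by (subst card_Un_disjoint) (auto simp: card_image)
  qed
  then show ?thesis using card_set_nth[OF d, of "Lb w"] cAD ne
    by (auto simp: des_def hd_conv_nth)
qed

lemma C3: assumes g: "good w" and ne: "w \<noteq> []" and h: "hd w < 0" and l: "last w < 0"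
  shows "peak w = card {y \<in> set w. Lb w y \<and> Rb w y}"
proof -
  have d: "distinct w" using g by (simp add: good_def)
  have "{i. i < length w \<and> Lb w (w ! i) \<and> Rb w (w ! i)} =
        {i. 0 < i \<and> i + 1 < length w \<and> w ! (i - 1) < w ! i \<and> w ! i > w ! (i + 1)}"
  proof -
    have "i \<in> {i. i < length w \<and> Lb w (w ! i) \<and> Rb w (w ! i)} \<longleftrightarrow>
        i \<in> {i. 0 < i \<and> i + 1 < length w \<and> w ! (i - 1) < w ! i \<and> w ! i > w ! (i + 1)}" for i
    proof (cases "i < length w")
      case False then show ?thesis by auto
    next
      case True
      have h0: "w ! 0 < 0" using h ne by (simp add: hd_conv_nth)
      have l0: "w ! (length w - 1) < 0" using l ne by (simp add: last_conv_nth)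
      show ?thesis
      proof (cases "i = 0")
        case True then show ?thesis using Lb_idx[OF g, of i] h0 ne by auto
      next
        case i0: False
        show ?thesis
        proof (cases "Suc i = length w")
          case True
          then have "i = length w - 1" by simp
          then show ?thesis using Rb_idx[OF g, of i] l0 True by auto
        next
          case False
          then show ?thesis using Lb_idx[OF g, of i] Rb_idx[OF g, of i] i0 \<open>i < length w\<close> by auto
        qed
      qed
    qed
    then show ?thesis by blast
  qed
  then show ?thesis using card_set_nth[OF d, of "\<lambda>y. Lb w y \<and> Rb w y"] by (simp add: peak_def)
qed

lemma no_dd_iff: assumes g: "good w"
  shows "no_dd w \<longleftrightarrow> (\<forall>y\<in>set w. \<not> (\<not> Lb w y \<and> Rb w y))"
proof -
  have ne: "pad w ! i \<noteq> w ! i" if "i < length w" for i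
    using pad_nth_eq[OF g that, of i] that by auto
  have "no_dd w \<longleftrightarrow> \<not> (\<exists>i < length w. pad w ! i > w ! i \<and> w ! i > pad w ! (i + 2))"
    unfolding no_dd_def
  proof
    assume a: "\<not> (\<exists>k>0. k + 1 < length (pad w) \<and> pad w ! k < pad w ! (k - 1) \<and> pad w ! (k + 1) < pad w ! k)"
    show "\<not> (\<exists>i < length w. pad w ! i > w ! i \<and> w ! i > pad w ! (i + 2))"
    proof
      assume "\<exists>i < length w. pad w ! i > w ! i \<and> w ! i > pad w ! (i + 2)"
      then obtain i where "i < length w" "pad w ! i > w ! i" "w ! i > pad w ! (i + 2)" by blast
      then have "Suc i > 0 \<and> Suc i + 1 < length (pad w) \<and> pad w ! Suc i < pad w ! (Suc i - 1) \<and> pad w ! (Suc i + 1) < pad w ! Suc i"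
        using nb_idx(3)[OF g, of i] by (simp add: numeral_2_eq_2)
      then show False using a by blast
    qed
  next
    assume a: "\<not> (\<exists>i < length w. pad w ! i > w ! i \<and> w ! i > pad w ! (i + 2))"
    show "\<not> (\<exists>k>0. k + 1 < length (pad w) \<and> pad w ! k < pad w ! (k - 1) \<and> pad w ! (k + 1) < pad w ! k)"
    proof
      assume "\<exists>k>0. k + 1 < length (pad w) \<and> pad w ! k < pad w ! (k - 1) \<and> pad w ! (k + 1) < pad w ! k"
      then obtain k where k: "k > 0" "k + 1 < length (pad w)" "pad w ! k < pad w ! (k - 1)" "pad w ! (k + 1) < pad w ! k" by blast
      then obtain i where i: "k = Suc i" by (cases k) auto
      then show False using a k nb_idx(3)[OF g, of i] by auto
    qed
  qed
  also have "\<dots> \<longleftrightarrow> (\<forall>y\<in>set w. \<not> (\<not> Lb w y \<and> Rb w y))"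
  proof -
    have "\<forall>i<length w. (\<not> Lb w (w!i) \<and> Rb w (w!i)) \<longleftrightarrow> (pad w ! i > w ! i \<and> w ! i > pad w ! (i + 2))"
      using nb_idx[OF g] ne unfolding Lb_def Rb_def by (auto simp: less_le)
    then show ?thesis unfolding all_set_conv_all_nth by auto
  qed
  finally show ?thesis .
qed



lemma rho_unique:
  assumes "sat_chain_from_min P lt c0" "last c0 = y"
    and "\<forall>c. sat_chain_from_min P lt c \<and> last c = y \<longrightarrow> eps_sum \<omega> c = v"
  shows "rho P lt \<omega> y = v"
  unfolding rho_def
proof (rule the_equality)
  show "\<forall>c. sat_chain_from_min P lt c \<and> last c = y \<longrightarrow> eps_sum \<omega> c = v" by fact
  fix v' assume "\<forall>c. sat_chain_from_min P lt c \<and> last c = y \<longrightarrow> eps_sum \<omega> c = v'"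
  then show "v' = v" using assms by metis
qed

lemma rho_min:
  assumes m: "minimal_in P lt y"
  shows "rho P lt \<omega> y = 0"
proof (rule rho_unique[of P lt "[y]"])
  show "sat_chain_from_min P lt [y]" using m by (simp add: sat_chain_from_min_def)
  show "last [y] = y" by simp
  show "\<forall>c. sat_chain_from_min P lt c \<and> last c = y \<longrightarrow> eps_sum \<omega> c = 0"
  proof (intro allI impI)
    fix c assume c: "sat_chain_from_min P lt c \<and> last c = y"
    have "length c = 1"
    proof (rule ccontr)
      assume "length c \<noteq> 1"
      moreover have "c \<noteq> []" using c by (simp add: sat_chain_from_min_def)
      ultimately have l: "length c \<ge> 2" by (metis One_nat_def Suc_1 Suc_leI le_neq_implies_less length_greater_0_conv)
      then have "covers P lt (c ! (length c - 2)) (c ! (length c - 2 + 1))"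
        using c unfolding sat_chain_from_min_def by auto
      moreover have "length c - 2 + 1 = length c - 1" using l by simp
      moreover have "c ! (length c - 1) = y" using c l last_conv_nth[of c] by (cases c) auto
      ultimately show False using m by (auto simp: covers_def minimal_in_def)
    qed
    then show "eps_sum \<omega> c = 0" by (simp add: eps_sum_def)
  qed
qed

lemma chain_exists:
  assumes fin: "finite P" and po: "strict_poset_on P lt"
  shows "y \<in> P \<Longrightarrow> \<exists>c. sat_chain_from_min P lt c \<and> last c = y"
proof (induction "card {z \<in> P. lt z y}" arbitrary: y rule: less_induct)
  case less
  show ?case
  proof (cases "minimal_in P lt y")
    case True
    then show ?thesis by (intro exI[of _ "[y]"]) (simp add: sat_chain_from_min_def)
  next
    case False
    let ?S = "{z \<in> P. lt z y}"
    let ?f = "\<lambda>z. card {u \<in> P. lt u z}"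
    obtain z0 where "z0 \<in> ?S" using False less.prems by (auto simp: minimal_in_def)
    have "\<forall>z. z \<in> ?S \<longrightarrow> ?f z < card P + 1"
    proof (intro allI impI)
      fix z assume "z \<in> ?S"
      have "?f z \<le> card P" using fin by (intro card_mono) auto
      then show "?f z < card P + 1" by simp
    qed
    then obtain z where z: "z \<in> ?S" and zmax: "\<forall>z'. z' \<in> ?S \<longrightarrow> ?f z' \<le> ?f z"
      using ex_has_greatest_nat[of "\<lambda>z. z \<in> ?S" z0 ?f "card P + 1", OF \<open>z0 \<in> ?S\<close>] by blast
    have irr: "\<forall>x\<in>P. \<not> lt x x" and tr: "\<forall>x\<in>P. \<forall>y\<in>P. \<forall>z\<in>P. lt x y \<longrightarrow> lt y z \<longrightarrow> lt x z"
      using po unfolding strict_poset_on_def by (rule conjunct1, rule conjunct2)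
    have cov: "covers P lt z y"
      unfolding covers_def
    proof (intro conjI)
      show "z \<in> P" "y \<in> P" "lt z y" using z less.prems by auto
      show "\<not> (\<exists>u\<in>P. lt z u \<and> lt u y)"
      proof
        assume "\<exists>u\<in>P. lt z u \<and> lt u y"
        then obtain u where u: "u \<in> P" "lt z u" "lt u y" by blast
        have "{v \<in> P. lt v z} \<subset> {v \<in> P. lt v u}"
        proof
          show "{v \<in> P. lt v z} \<subseteq> {v \<in> P. lt v u}" using u z tr by blast
          show "{v \<in> P. lt v z} \<noteq> {v \<in> P. lt v u}" using u z irr by blast
        qed
        then have "?f z < ?f u" using fin by (intro psubset_card_mono) simp_all
        moreover have "?f u \<le> ?f z" using zmax u by auto
        ultimately show False by simp
      qed
    qed
    have "{v \<in> P. lt v z} \<subset> ?S"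
    proof
      show "{v \<in> P. lt v z} \<subseteq> ?S" using z tr less.prems by blast
      show "{v \<in> P. lt v z} \<noteq> ?S" using z irr by blast
    qed
    then have "card {v \<in> P. lt v z} < card ?S" using fin by (intro psubset_card_mono) simp_all
    moreover have "z \<in> P" using z by simp
    ultimately obtain c where c: "sat_chain_from_min P lt c" "last c = z"
      using less.hyps[of z] by blast
    have cne: "c \<noteq> []" using c by (simp add: sat_chain_from_min_def)
    have "sat_chain_from_min P lt (c @ [y])"
      unfolding sat_chain_from_min_def
    proof (intro conjI allI impI)
      show "c @ [y] \<noteq> []" by simp
      show "minimal_in P lt (hd (c @ [y]))" using c cne by (simp add: sat_chain_from_min_def)
      fix i assume i: "i + 1 < length (c @ [y])"
      show "covers P lt ((c @ [y]) ! i) ((c @ [y]) ! (i + 1))"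
      proof (cases "i + 1 < length c")
        case True then show ?thesis using c by (simp add: sat_chain_from_min_def nth_append)
      next
        case False
        then have "i = length c - 1" using i by simp
        then show ?thesis using cov c cne by (simp add: nth_append last_conv_nth)
      qed
    qed
    then show ?thesis by (intro exI[of _ "c @ [y]"]) simp
  qed
qed

lemma rho_max:
  assumes fin: "finite P" and po: "strict_poset_on P lt" and sg: "sign_graded_rank P lt \<omega> r"
    and m: "maximal_in P lt y"
  shows "rho P lt \<omega> y = r"
proof -
  obtain c where c: "sat_chain_from_min P lt c" "last c = y"
    using chain_exists[OF fin po] m by (auto simp: maximal_in_def)
  show ?thesis
  proof (rule rho_unique[OF c])
    show "\<forall>c. sat_chain_from_min P lt c \<and> last c = y \<longrightarrow> eps_sum \<omega> c = r"
      using sg m by (auto simp: sign_graded_rank_def maximal_chain_def)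
  qed
qed

lemma JH_facts:
  assumes fin: "finite P" and ne: "P \<noteq> {}" and po: "strict_poset_on P lt" and inj: "inj_on \<omega> P"
    and sg: "sign_graded_rank P lt \<omega> r" and can: "canonical P lt \<omega>"
    and pi: "\<pi> \<in> JH P lt \<omega>"
  shows "good \<pi>" "\<pi> \<noteq> []" "set \<pi> = \<omega> ` P" "length \<pi> = card P" "hd \<pi> < 0"
    "r \<in> {0, 1}" "last \<pi> > 0 \<longleftrightarrow> r = 1" "last \<pi> < 0 \<longleftrightarrow> r = 0"
proof -
  have d: "distinct \<pi>" and s: "set \<pi> = \<omega> ` P" and ord: "\<forall>x\<in>P. \<forall>y\<in>P. lt x y \<longrightarrow>
        (\<exists>i j. i < j \<and> j < length \<pi> \<and> \<pi> ! i = \<omega> x \<and> \<pi> ! j = \<omega> y)"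
    using pi by (auto simp: JH_def)
  have sgn: "\<omega> x \<noteq> 0" if "x \<in> P" for x
    using can that unfolding canonical_def by force
  show g: "good \<pi>" using d s sgn by (auto simp: good_def)
  show s': "set \<pi> = \<omega> ` P" by (rule s)
  show pne: "\<pi> \<noteq> []" using s ne by auto
  show "length \<pi> = card P" using distinct_card[OF d] s card_image[OF inj] by simp
  obtain y0 where y0: "y0 \<in> P" "hd \<pi> = \<omega> y0" using pne s by (metis hd_in_set imageE)
  have "minimal_in P lt y0"
    unfolding minimal_in_def
  proof (intro conjI notI)
    show "y0 \<in> P" by fact
    assume "\<exists>z\<in>P. lt z y0"
    then obtain z where z: "z \<in> P" "lt z y0" by blast
    then obtain i j where ij: "i < j" "j < length \<pi>" "\<pi> ! i = \<omega> z" "\<pi> ! j = \<omega> y0"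
      using ord y0 by blast
    have "\<pi> ! 0 = \<omega> y0" using y0 pne by (simp add: hd_conv_nth)
    then have "j = 0" using nth_eq_iff_index_eq[OF d, of 0 j] ij pne by auto
    then show False using ij by simp
  qed
  then have "rho P lt \<omega> y0 = 0" by (rule rho_min)
  then show "hd \<pi> < 0" using can y0 unfolding canonical_def by auto
  obtain y1 where y1: "y1 \<in> P" "last \<pi> = \<omega> y1" using pne s by (metis last_in_set imageE)
  have "maximal_in P lt y1"
    unfolding maximal_in_def
  proof (intro conjI notI)
    show "y1 \<in> P" by fact
    assume "\<exists>z\<in>P. lt y1 z"
    then obtain z where z: "z \<in> P" "lt y1 z" by blast
    then obtain i j where ij: "i < j" "j < length \<pi>" "\<pi> ! i = \<omega> y1" "\<pi> ! j = \<omega> z"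
      using ord y1 by blast
    have "\<pi> ! (length \<pi> - 1) = \<omega> y1" using y1 pne by (simp add: last_conv_nth)
    then have "i = length \<pi> - 1" using nth_eq_iff_index_eq[OF d, of "length \<pi> - 1" i] ij pne by auto
    then show False using ij by simp
  qed
  then have rr: "rho P lt \<omega> y1 = r" by (rule rho_max[OF fin po sg])
  have r01: "r \<in> {0, 1}" using can y1 rr unfolding canonical_def by auto
  then show "r \<in> {0, 1}" .
  have "r = 0 \<Longrightarrow> \<omega> y1 < 0" "r = 1 \<Longrightarrow> \<omega> y1 > 0" using can y1 rr unfolding canonical_def by auto
  then show "last \<pi> > 0 \<longleftrightarrow> r = 1" "last \<pi> < 0 \<longleftrightarrow> r = 0" using r01 y1 by auto
qed



definition Dd :: "int list \<Rightarrow> int set" where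
  "Dd w = {y \<in> set w. \<not> Lb w y \<and> Rb w y}"
definition Pk :: "int list \<Rightarrow> int set" where
  "Pk w = {y \<in> set w. Lb w y \<and> Rb w y}"

lemma orb_fold:
  assumes "finite P" "\<sigma> \<in> Orb P \<omega> \<pi>"
  shows "\<exists>X. finite X \<and> \<sigma> = fold psi (sorted_list_of_set X) \<pi>"
proof -
  obtain S where S: "S \<subseteq> P" "\<sigma> = fold psi (sorted_list_of_set (\<omega> ` S)) \<pi>"
    using assms(2) unfolding Orb_def psiS_def by blast
  have "finite (\<omega> ` S)" using finite_subset[OF S(1) assms(1)] by simp
  then show ?thesis using S(2) by blast
qed

lemma fold_props:
  assumes g: "good \<pi>" and fX: "finite X"
  defines "\<sigma> \<equiv> fold psi (sorted_list_of_set X) \<pi>"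
  shows "inv_ok \<pi> \<sigma>" "Dbl \<sigma> = Dbl \<pi>" "Pk \<sigma> = Pk \<pi>" "Dd \<sigma> \<subseteq> Dbl \<pi>"
    "\<forall>y\<in>Dbl \<pi>. y \<in> Dd \<sigma> \<longleftrightarrow> (y \<in> X \<longleftrightarrow> y \<notin> Dd \<pi>)"
proof -
  have fp: "inv_ok \<pi> \<sigma> \<and> Dbl \<sigma> = Dbl \<pi> \<and>
    (\<forall>y\<in>set \<pi>. (Lb \<sigma> y \<longleftrightarrow> (if y \<in> X \<and> y \<in> Dbl \<pi> then \<not> Lb \<pi> y else Lb \<pi> y)) \<and>
                (Rb \<sigma> y \<longleftrightarrow> (if y \<in> X \<and> y \<in> Dbl \<pi> then \<not> Rb \<pi> y else Rb \<pi> y)))"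
    using fold_psi[OF g, of "sorted_list_of_set X"] fX unfolding \<sigma>_def by simp
  then have s: "set \<sigma> = set \<pi>" by (simp add: inv_ok_def)
  show "inv_ok \<pi> \<sigma>" "Dbl \<sigma> = Dbl \<pi>" using fp by auto
  show "Pk \<sigma> = Pk \<pi>" using fp s unfolding Pk_def Dbl_def by (auto split: if_splits)
  show "Dd \<sigma> \<subseteq> Dbl \<pi>" using fp s unfolding Dd_def Dbl_def by (auto split: if_splits)
  show "\<forall>y\<in>Dbl \<pi>. y \<in> Dd \<sigma> \<longleftrightarrow> (y \<in> X \<longleftrightarrow> y \<notin> Dd \<pi>)"
    using fp s unfolding Dd_def Dbl_def by (auto split: if_splits)
qed

lemma fold_eq:
  assumes g: "good \<pi>" and f1: "finite X1" and f2: "finite X2" and e: "X1 \<inter> Dbl \<pi> = X2 \<inter> Dbl \<pi>"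
  shows "fold psi (sorted_list_of_set X1) \<pi> = fold psi (sorted_list_of_set X2) \<pi>"
proof -
  have "filter (\<lambda>x. x \<in> Dbl \<pi>) (sorted_list_of_set X1) = filter (\<lambda>x. x \<in> Dbl \<pi>) (sorted_list_of_set X2)"
    by (rule sorted_distinct_set_unique) (use f1 f2 e in \<open>auto simp: sorted_wrt_filter\<close>)
  then show ?thesis using fold_filter[OF g] by metis
qed

lemma sum_pow_card:
  fixes t :: real
  assumes "finite A"
  shows "(\<Sum>T\<in>Pow A. t ^ card T) = (1 + t) ^ card A"
  using assms
proof (induction A rule: finite_induct)
  case empty then show ?case by simp
next
  case (insert a A)
  have "Pow (insert a A) = Pow A \<union> insert a ` Pow A" by (rule Pow_insert)
  moreover have "Pow A \<inter> insert a ` Pow A = {}" using insert by auto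
  moreover have "inj_on (insert a) (Pow A)"
  proof (rule inj_onI)
    fix x y assume "x \<in> Pow A" "y \<in> Pow A" "insert a x = insert a y"
    then show "x = y" using \<open>a \<notin> A\<close> by (metis Diff_insert_absorb PowD subsetD)
  qed
  moreover have "\<And>T. T \<in> Pow A \<Longrightarrow> card (insert a T) = Suc (card T)"
  proof -
    fix T assume "T \<in> Pow A"
    then have "finite T" "a \<notin> T" using insert finite_subset by auto
    then show "card (insert a T) = Suc (card T)" by simp
  qed
  ultimately have "(\<Sum>T\<in>Pow (insert a A). t ^ card T) = (\<Sum>T\<in>Pow A. t ^ card T) + (\<Sum>T\<in>Pow A. t ^ Suc (card T))"
    using insert by (simp add: sum.union_disjoint sum.reindex)
  also have "\<dots> = (1 + t) * (\<Sum>T\<in>Pow A. t ^ card T)" by (simp add: sum_distrib_left algebra_simps sum.distrib)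
  finally show ?case using insert by simp
qed



lemma Dd_sub: "Dd w \<subseteq> Dbl w" by (auto simp: Dd_def Dbl_def)

lemma orb_bij:
  assumes fin: "finite P" and g: "good \<pi>" and sP: "set \<pi> = \<omega> ` P"
  shows "bij_betw Dd (Orb P \<omega> \<pi>) (Pow (Dbl \<pi>))"
  unfolding bij_betw_def
proof (intro conjI)
  show "inj_on Dd (Orb P \<omega> \<pi>)"
  proof (rule inj_onI)
    fix s1 s2 assume s1: "s1 \<in> Orb P \<omega> \<pi>" and s2: "s2 \<in> Orb P \<omega> \<pi>" and e: "Dd s1 = Dd s2"
    obtain X1 where X1: "finite X1" "s1 = fold psi (sorted_list_of_set X1) \<pi>" using orb_fold[OF fin s1] by blast
    obtain X2 where X2: "finite X2" "s2 = fold psi (sorted_list_of_set X2) \<pi>" using orb_fold[OF fin s2] by blast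
    have h1: "\<forall>y\<in>Dbl \<pi>. y \<in> Dd s1 \<longleftrightarrow> (y \<in> X1 \<longleftrightarrow> y \<notin> Dd \<pi>)"
      using fold_props(5)[OF g X1(1)] X1(2) by simp
    have h2: "\<forall>y\<in>Dbl \<pi>. y \<in> Dd s2 \<longleftrightarrow> (y \<in> X2 \<longleftrightarrow> y \<notin> Dd \<pi>)"
      using fold_props(5)[OF g X2(1)] X2(2) by simp
    have "X1 \<inter> Dbl \<pi> = X2 \<inter> Dbl \<pi>"
    proof (rule set_eqI)
      fix y show "y \<in> X1 \<inter> Dbl \<pi> \<longleftrightarrow> y \<in> X2 \<inter> Dbl \<pi>"
      proof (cases "y \<in> Dbl \<pi>")
        case True
        then have "y \<in> Dd s1 \<longleftrightarrow> (y \<in> X1 \<longleftrightarrow> y \<notin> Dd \<pi>)" "y \<in> Dd s2 \<longleftrightarrow> (y \<in> X2 \<longleftrightarrow> y \<notin> Dd \<pi>)"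
          using h1 h2 by blast+
        then show ?thesis using True e by auto
      qed simp
    qed
    then show "s1 = s2" using fold_eq[OF g X1(1) X2(1)] X1(2) X2(2) by simp
  qed
  show "Dd ` Orb P \<omega> \<pi> = Pow (Dbl \<pi>)"
  proof
    show "Dd ` Orb P \<omega> \<pi> \<subseteq> Pow (Dbl \<pi>)"
    proof
      fix T assume "T \<in> Dd ` Orb P \<omega> \<pi>"
      then obtain s where s: "s \<in> Orb P \<omega> \<pi>" "T = Dd s" by blast
      obtain X where X: "finite X" "s = fold psi (sorted_list_of_set X) \<pi>" using orb_fold[OF fin s(1)] by blast
      show "T \<in> Pow (Dbl \<pi>)" using fold_props(4)[OF g X(1)] X s by auto
    qed
    show "Pow (Dbl \<pi>) \<subseteq> Dd ` Orb P \<omega> \<pi>"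
    proof
      fix T assume T: "T \<in> Pow (Dbl \<pi>)"
      define X where "X = (Dd \<pi> - T) \<union> (T - Dd \<pi>)"
      have XD: "X \<subseteq> Dbl \<pi>" using T Dd_sub[of \<pi>] unfolding X_def by auto
      have Dbls: "Dbl \<pi> \<subseteq> set \<pi>" by (auto simp: Dbl_def)
      define S where "S = {z \<in> P. \<omega> z \<in> X}"
      have SX: "\<omega> ` S = X"
      proof
        show "\<omega> ` S \<subseteq> X" unfolding S_def by blast
        show "X \<subseteq> \<omega> ` S"
        proof
          fix x assume x: "x \<in> X"
          then have "x \<in> \<omega> ` P" using XD Dbls sP by blast
          then obtain z where "z \<in> P" "x = \<omega> z" by blast
          then show "x \<in> \<omega> ` S" using x unfolding S_def by blast
        qed
      qed
      have fX: "finite X" by (rule finite_subset[of _ "set \<pi>"]) (use XD Dbls in auto)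
      let ?s = "fold psi (sorted_list_of_set X) \<pi>"
      have SP: "S \<subseteq> P" unfolding S_def by blast
      have "?s = psiS \<omega> S \<pi>" unfolding psiS_def SX ..
      then have "?s \<in> Orb P \<omega> \<pi>" unfolding Orb_def using SP by blast
      moreover have "Dd ?s = T"
      proof -
        have "Dd ?s \<subseteq> Dbl \<pi>" by (rule fold_props(4)[OF g fX])
        have h: "\<forall>y\<in>Dbl \<pi>. y \<in> Dd ?s \<longleftrightarrow> (y \<in> X \<longleftrightarrow> y \<notin> Dd \<pi>)" by (rule fold_props(5)[OF g fX])
        show ?thesis
        proof (rule set_eqI)
          fix y show "y \<in> Dd ?s \<longleftrightarrow> y \<in> T"
          proof (cases "y \<in> Dbl \<pi>")
            case True
            then have "y \<in> Dd ?s \<longleftrightarrow> (y \<in> X \<longleftrightarrow> y \<notin> Dd \<pi>)" using h by blast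
            then show ?thesis unfolding X_def by auto
          next
            case False then show ?thesis using T \<open>Dd ?s \<subseteq> Dbl \<pi>\<close> by auto
          qed
        qed
      qed
      ultimately show "T \<in> Dd ` Orb P \<omega> \<pi>" by blast
    qed
  qed
qed

lemma des_orb:
  assumes fin: "finite P" and g: "good \<pi>" and ne: "\<pi> \<noteq> []" and s: "\<sigma> \<in> Orb P \<omega> \<pi>"
  shows "des \<sigma> + (if last \<pi> > 0 then 1 else 0) = card (Pk \<pi>) + card (Dd \<sigma>)"
    "inv_ok \<pi> \<sigma>" "Pk \<sigma> = Pk \<pi>" "Dbl \<sigma> = Dbl \<pi>"
proof -
  obtain X where X: "finite X" "\<sigma> = fold psi (sorted_list_of_set X) \<pi>" using orb_fold[OF fin s] by blast
  note fp = fold_props[OF g X(1), folded X(2)]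
  show io: "inv_ok \<pi> \<sigma>" "Pk \<sigma> = Pk \<pi>" "Dbl \<sigma> = Dbl \<pi>" using fp by auto
  have gs: "good \<sigma>" and nes: "\<sigma> \<noteq> []" and l: "last \<sigma> > 0 \<longleftrightarrow> last \<pi> > 0"
    using io(1) ne unfolding inv_ok_def by auto
  have "{y \<in> set \<sigma>. Rb \<sigma> y} = Pk \<sigma> \<union> Dd \<sigma>" by (auto simp: Pk_def Dd_def)
  moreover have "Pk \<sigma> \<inter> Dd \<sigma> = {}" by (auto simp: Pk_def Dd_def)
  moreover have "finite (Pk \<sigma>)" "finite (Dd \<sigma>)" by (auto simp: Pk_def Dd_def)
  ultimately have "card {y \<in> set \<sigma>. Rb \<sigma> y} = card (Pk \<sigma>) + card (Dd \<sigma>)"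
    by (simp add: card_Un_disjoint)
  then show "des \<sigma> + (if last \<pi> > 0 then 1 else 0) = card (Pk \<pi>) + card (Dd \<sigma>)"
    using C1[OF gs nes] l io(2) by simp
qed

lemma self_orb: "finite P \<Longrightarrow> \<pi> \<in> Orb P \<omega> \<pi>"
  unfolding Orb_def psiS_def by (rule CollectI, rule exI[of _ "{}"]) simp



lemma Lb_card:
  assumes "Dd w = {}"
  shows "card {y \<in> set w. Lb w y} = card (Pk w) + card (Dbl w)"
proof -
  have "{y \<in> set w. Lb w y} = Pk w \<union> Dbl w" using assms by (auto simp: Pk_def Dbl_def Dd_def)
  moreover have "Pk w \<inter> Dbl w = {}" by (auto simp: Pk_def Dbl_def)
  moreover have "finite (Pk w)" "finite (Dbl w)" by (auto simp: Pk_def Dbl_def)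
  ultimately show ?thesis by (simp add: card_Un_disjoint)
qed

lemma Dd_empty_iff: "good w \<Longrightarrow> no_dd w \<longleftrightarrow> Dd w = {}"
  using no_dd_iff[of w] by (auto simp: Dd_def)

theorem theorem6p3:
  fixes P :: "'a set" and lt :: "'a \<Rightarrow> 'a \<Rightarrow> bool" and \<omega> :: "'a \<Rightarrow> int"
    and r :: int and \<pi> :: "int list"
  assumes "finite P" and "P \<noteq> {}" and "strict_poset_on P lt" and "inj_on \<omega> P"
    and "sign_graded_rank P lt \<omega> r" and "canonical P lt \<omega>"
    and "\<pi> \<in> JH P lt \<omega>"
  shows "(\<exists>\<pi>h\<in>Orb P \<omega> \<pi>. no_dd \<pi>h) \<and>
    (\<forall>\<pi>h\<in>Orb P \<omega> \<pi>. no_dd \<pi>h \<longrightarrow>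
        int (card P) - r - 1 - 2 * int (des \<pi>h) \<ge> 0 \<and>
        (\<forall>t::real. (\<Sum>\<sigma>\<in>Orb P \<omega> \<pi>. t ^ des \<sigma>) =
           t ^ des \<pi>h * (1 + t) ^ nat (int (card P) - r - 1 - 2 * int (des \<pi>h)))) \<and>
    (r = 0 \<longrightarrow>
       (\<forall>\<pi>'\<in>JH P lt \<omega>. \<forall>\<sigma>\<in>Orb P \<omega> \<pi>'. peak \<sigma> = peak \<pi>') \<and>
       (\<forall>\<pi>'\<in>JH P lt \<omega>. \<forall>\<pi>h\<in>Orb P \<omega> \<pi>'. no_dd \<pi>h \<longrightarrow> peak \<pi>' = des \<pi>h))"
proof -
  note fin = assms(1)
  note JF = JH_facts[OF assms(1-6)]
  have g: "good \<pi>" and ne: "\<pi> \<noteq> []" and sP: "set \<pi> = \<omega> ` P" and len: "length \<pi> = card P"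
    and hd0: "hd \<pi> < 0" and r01: "r \<in> {0, 1}" and lp: "last \<pi> > 0 \<longleftrightarrow> r = 1"
    using JF[OF assms(7)] by auto
  have bij: "bij_betw Dd (Orb P \<omega> \<pi>) (Pow (Dbl \<pi>))" by (rule orb_bij[OF fin g sP])
  have good_orb: "good \<sigma>" if "\<sigma> \<in> Orb P \<omega> \<pi>" for \<sigma>
    using des_orb(2)[OF fin g ne that] by (simp add: inv_ok_def)
  have P1: "\<exists>\<pi>h\<in>Orb P \<omega> \<pi>. no_dd \<pi>h"
  proof -
    have "{} \<in> Dd ` Orb P \<omega> \<pi>" using bij unfolding bij_betw_def by auto
    then obtain \<sigma> where "\<sigma> \<in> Orb P \<omega> \<pi>" "Dd \<sigma> = {}" by force
    then show ?thesis using Dd_empty_iff[OF good_orb] by blast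
  qed
  have P2: "int (card P) - r - 1 - 2 * int (des \<pi>h) \<ge> 0 \<and>
        (\<forall>t::real. (\<Sum>\<sigma>\<in>Orb P \<omega> \<pi>. t ^ des \<sigma>) =
           t ^ des \<pi>h * (1 + t) ^ nat (int (card P) - r - 1 - 2 * int (des \<pi>h)))"
    if h: "\<pi>h \<in> Orb P \<omega> \<pi>" "no_dd \<pi>h" for \<pi>h
  proof -
    have gh: "good \<pi>h" by (rule good_orb[OF h(1)])
    have Ddh: "Dd \<pi>h = {}" using Dd_empty_iff[OF gh] h(2) by simp
    note dh = des_orb[OF fin g ne h(1)]
    have io: "inv_ok \<pi> \<pi>h" by (rule dh(2))
    have neh: "\<pi>h \<noteq> []" and hdh: "hd \<pi>h < 0" and lenh: "length \<pi>h = card P"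
      using io ne hd0 len unfolding inv_ok_def by auto
    have e1: "des \<pi>h + (if r = 1 then 1 else 0) = card (Pk \<pi>)" using dh(1) Ddh lp by simp
    have e2: "card {y \<in> set \<pi>h. Lb \<pi>h y} + des \<pi>h + 1 = card P"
      using C1'[OF gh neh] hdh lenh by simp
    have e3: "card {y \<in> set \<pi>h. Lb \<pi>h y} = card (Pk \<pi>) + card (Dbl \<pi>)"
      using Lb_card[OF Ddh] dh(3,4) by simp
    have ex: "int (card P) - r - 1 - 2 * int (des \<pi>h) = int (card (Dbl \<pi>))"
      using e1 e2 e3 r01 by (auto split: if_splits)
    have S: "(\<Sum>\<sigma>\<in>Orb P \<omega> \<pi>. t ^ des \<sigma>) = t ^ des \<pi>h * (1 + t) ^ card (Dbl \<pi>)" for t :: real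
    proof -
      have "des \<sigma> = des \<pi>h + card (Dd \<sigma>)" if "\<sigma> \<in> Orb P \<omega> \<pi>" for \<sigma>
        using des_orb(1)[OF fin g ne that] e1 lp by (auto split: if_splits)
      then have "(\<Sum>\<sigma>\<in>Orb P \<omega> \<pi>. t ^ des \<sigma>) = (\<Sum>\<sigma>\<in>Orb P \<omega> \<pi>. t ^ des \<pi>h * t ^ card (Dd \<sigma>))"
        by (intro sum.cong) (auto simp: power_add)
      also have "\<dots> = t ^ des \<pi>h * (\<Sum>\<sigma>\<in>Orb P \<omega> \<pi>. t ^ card (Dd \<sigma>))" by (simp add: sum_distrib_left)
      also have "(\<Sum>\<sigma>\<in>Orb P \<omega> \<pi>. t ^ card (Dd \<sigma>)) = (\<Sum>T\<in>Pow (Dbl \<pi>). t ^ card T)"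
        by (rule sum.reindex_bij_betw[OF bij])
      also have "\<dots> = (1 + t) ^ card (Dbl \<pi>)"
        by (rule sum_pow_card) (auto simp: Dbl_def)
      finally show ?thesis .
    qed
    show ?thesis using ex S by simp
  qed
  have P3: "(\<forall>\<pi>'\<in>JH P lt \<omega>. \<forall>\<sigma>\<in>Orb P \<omega> \<pi>'. peak \<sigma> = peak \<pi>') \<and>
       (\<forall>\<pi>'\<in>JH P lt \<omega>. \<forall>\<pi>h\<in>Orb P \<omega> \<pi>'. no_dd \<pi>h \<longrightarrow> peak \<pi>' = des \<pi>h)" if r0: "r = 0"
  proof (intro conjI ballI impI)
    fix \<pi>' assume pi': "\<pi>' \<in> JH P lt \<omega>"
    have g': "good \<pi>'" and ne': "\<pi>' \<noteq> []" and hd': "hd \<pi>' < 0" and lp': "last \<pi>' < 0"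
      using JF[OF pi'] r0 by auto
    have pk': "peak \<pi>' = card (Pk \<pi>')" using C3[OF g' ne' hd' lp'] by (simp add: Pk_def)
    have orbfacts: "good \<sigma> \<and> \<sigma> \<noteq> [] \<and> hd \<sigma> < 0 \<and> last \<sigma> < 0 \<and> peak \<sigma> = card (Pk \<pi>')"
      if s: "\<sigma> \<in> Orb P \<omega> \<pi>'" for \<sigma>
    proof -
      have io: "inv_ok \<pi>' \<sigma>" by (rule des_orb(2)[OF fin g' ne' s])
      then have gs: "good \<sigma>" and nes: "\<sigma> \<noteq> []" and hs: "hd \<sigma> < 0" and lnp: "\<not> last \<sigma> > 0"
        using ne' hd' lp' unfolding inv_ok_def by auto
      have "last \<sigma> \<noteq> 0" using gs last_in_set[OF nes] unfolding good_def by metis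
      then have ls: "last \<sigma> < 0" using lnp by simp
      have "peak \<sigma> = card (Pk \<sigma>)" using C3[OF gs nes hs ls] by (simp add: Pk_def)
      then show ?thesis using gs nes hs ls des_orb(3)[OF fin g' ne' s] by simp
    qed
    { fix \<sigma> assume s: "\<sigma> \<in> Orb P \<omega> \<pi>'"
      show "peak \<sigma> = peak \<pi>'" using orbfacts[OF s] pk' by simp }
    { fix \<pi>h assume s: "\<pi>h \<in> Orb P \<omega> \<pi>'" and nd: "no_dd \<pi>h"
      have "Dd \<pi>h = {}" using Dd_empty_iff[of \<pi>h] orbfacts[OF s] nd by simp
      then show "peak \<pi>' = des \<pi>h" using des_orb(1)[OF fin g' ne' s] lp' pk' by simp }
  qed
  show ?thesis using P1 P2 P3 by blast
qed

end
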